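(* Let $\delta_1=b-d>0$, $\delta_2=c-a>0$, $\delta=\delta_1+\delta_2$, $s^*=\delta_1/\delta$, $\gamma=s^*(1-s^* )$, let $p\in[0,1]$ and $\tau\ge 0$, and consider the replicator dynamics with discrete delays $$\frac{ds(t)}{dt}=s(t)(1-s(t))\big(- p\, \delta\, s(t-\tau)-(1-p)\, \delta\, s(t)+\delta_1\big).$$ Then: (i) if $p\le 0.5$, the mixed equilibrium $s^*$ is (locally) asymptotically stable for every value of $\tau\ge 0$; (ii) if $p>0.5$, a Hopf bifurcation of the equilibrium $s^*$ occurs at $\tau=\tau_{cr}$, where $$\tau_{cr}=\frac{\arccos\!\big(-\frac{1-p}{p}\big)}{\delta\gamma \sqrt{2p-1}},$$ with $\arccos$ taking values in $[0,\pi]$.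
   Context: Two-strategy evolutionary game with payoff matrix $\begin{pmatrix} a&b\\ c&d\end{pmatrix}$; $s(t)\in[0,1]$ is the fraction of the population playing strategy $A$; a strategy's payoff is felt with delay $\tau$ with probability $p$ and without delay with probability $1-p$. The linearization at $s^*$ (with $x=s-s^*$) is $\dot x(t)=-(1-p)\delta\gamma x(t)-p\delta\gamma x(t-\tau)$, with characteristic equation $\lambda+(1-p)\delta\gamma+p\delta\gamma e^{-\lambda\tau}=0$. Asymptotic stability means all characteristic roots have negative real part; a Hopf bifurcation at $\tau_{cr}$ means a pair of characteristic roots $\pm i w_0$, $w_0>0$, lies on the imaginary axis at $\tau=\tau_{cr}$ and crosses it transversally into the right half-plane as $\tau$ increases. *)

theory Defs
  imports "HOL-Analysis.Analysis"
begin

text \<open>Characteristic function of the linearization at the mixed equilibrium: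
  z + (1-p) delta gamma + p delta gamma exp(-lambda tau).\<close>
definition char_fun :: "real \<Rightarrow> real \<Rightarrow> real \<Rightarrow> real \<Rightarrow> complex \<Rightarrow> complex" where
  "char_fun \<delta> \<gamma> p \<tau> z =
     z + complex_of_real ((1 - p) * \<delta> * \<gamma>)
       + complex_of_real (p * \<delta> * \<gamma>) * exp (- z * complex_of_real \<tau>)"

definition asympt_stable :: "real \<Rightarrow> real \<Rightarrow> real \<Rightarrow> real \<Rightarrow> bool" where
  "asympt_stable \<delta> \<gamma> p \<tau> \<longleftrightarrow> (\<forall>z. char_fun \<delta> \<gamma> p \<tau> z = 0 \<longrightarrow> Re z < 0)"

definition hopf_bifurcation_at :: "real \<Rightarrow> real \<Rightarrow> real \<Rightarrow> real \<Rightarrow> bool" where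
  "hopf_bifurcation_at \<delta> \<gamma> p \<tau>cr \<longleftrightarrow>
     (\<exists>w0 > 0.
        char_fun \<delta> \<gamma> p \<tau>cr (\<i> * complex_of_real w0) = 0 \<and>
        char_fun \<delta> \<gamma> p \<tau>cr (- \<i> * complex_of_real w0) = 0 \<and>
        (\<exists>L :: real \<Rightarrow> complex. \<exists>L' e. e > 0 \<and>
           (\<forall>\<tau>. \<bar>\<tau> - \<tau>cr\<bar> < e \<longrightarrow> char_fun \<delta> \<gamma> p \<tau> (L \<tau>) = 0) \<and>
           L \<tau>cr = \<i> * complex_of_real w0 \<and>
           (L has_vector_derivative L') (at \<tau>cr) \<and>
           Re L' > 0))"

end

theory Submission imports Defs "HOL-Complex_Analysis.Complex_Analysis" begin

lemma part_i:
  assumes k: "\<delta> * \<gamma> > 0" and p: "0 \<le> p" "p \<le> 1/2" and t: "\<tau> \<ge> 0"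
  shows "asympt_stable \<delta> \<gamma> p \<tau>"
  unfolding asympt_stable_def
proof (intro allI impI, rule ccontr)
  fix z assume c: "char_fun \<delta> \<gamma> p \<tau> z = 0" and nz: "\<not> Re z < 0"
  define a where "a = (1 - p) * \<delta> * \<gamma>"
  define b where "b = p * \<delta> * \<gamma>"
  have ab: "b \<le> a" "0 \<le> b" using k p by (auto simp: a_def b_def mult.assoc mult_right_mono)
  have eq: "z + of_real a = - (of_real b * exp (- z * of_real \<tau>))"
    using c unfolding char_fun_def a_def b_def by (simp add: algebra_simps add_eq_0_iff)
  have "cmod (z + of_real a) = b * exp (- Re z * \<tau>)"
    unfolding eq using ab by (simp add: norm_mult)
  also have "\<dots> \<le> b" using nz t ab by (simp add: mult_left_le)
  finally have le: "cmod (z + of_real a) \<le> b" .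
  have "(cmod (z + of_real a))\<^sup>2 = (Re z + a)\<^sup>2 + (Im z)\<^sup>2" by (simp add: cmod_power2)
  moreover have "(cmod (z + of_real a))\<^sup>2 \<le> b\<^sup>2" using le by (simp add: power_mono)
  moreover have "b\<^sup>2 \<le> (Re z + a)\<^sup>2" using ab nz by (intro power_mono) auto
  ultimately have h: "(Im z)\<^sup>2 \<le> 0" "(Re z + a)\<^sup>2 \<le> b\<^sup>2" using zero_le_power2[of "Im z"] by linarith+
  have "Im z = 0" using h(1) by simp
  moreover have "Re z + a \<le> b" using h(2) ab by (simp add: power2_le_iff_abs_le)
  ultimately have "Im z = 0" "Re z + a = b" using ab nz by auto
  then have "z = 0" using ab nz by (simp add: complex_eq_iff)
  then show False using c k by (auto simp: char_fun_def algebra_simps)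
qed

lemma aux_inv: "(X::complex) \<noteq> 0 \<Longrightarrow> E \<noteq> 0 \<Longrightarrow> inverse (X*E) * (z*E*c) = z*c/X"
  by (simp add: field_simps)

lemma aux2: fixes I A T :: complex assumes "T \<noteq> 0" "1 + (I+A)*T \<noteq> 0"
  shows "((I+A)*T*(1+A*T)/(1+(I+A)*T) - (I+A)*T)/T^2 = -I*(I+A)/(1+(I+A)*T)"
proof -
  define D where "D = 1 + (I+A)*T"
  have D: "D \<noteq> 0" using assms by (simp add: D_def)
  have "(I+A)*T*(1+A*T)/D - (I+A)*T = ((I+A)*T*(1+A*T) - (I+A)*T*D)/D"
    using D by (simp add: diff_divide_distrib)
  also have "(I+A)*T*(1+A*T) - (I+A)*T*D = -I*(I+A)*T^2"
    by (simp add: D_def algebra_simps power2_eq_square)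
  finally have "((I+A)*T*(1+A*T)/D - (I+A)*T)/T^2 = (-I*(I+A)*T^2/D)/T^2" by simp
  also have "\<dots> = -I*(I+A)/D" using assms by simp
  finally show ?thesis unfolding D_def .
qed
lemma reQ: fixes w a T :: real assumes "w > 0" "T > 0" "a \<ge> 0"
  shows "Re (- (\<i> * of_real w) * (\<i> * of_real w + of_real a) / (1 + (\<i> * of_real w + of_real a) * of_real T)) > 0"
proof -
  have "Re (- (\<i> * of_real w) * (\<i> * of_real w + of_real a) / (1 + (\<i> * of_real w + of_real a) * of_real T))
    = w\<^sup>2 / ((1 + a*T)\<^sup>2 + (w*T)\<^sup>2)"
    unfolding Re_divide by (simp add: algebra_simps power2_eq_square)
  moreover have "0 < w\<^sup>2 / ((1 + a*T)\<^sup>2 + (w*T)\<^sup>2)" using assms by (intro divide_pos_pos) (simp_all add: add_nonneg_pos)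
  ultimately show ?thesis by linarith
qed

lemma part_ii:
  assumes k: "\<delta> * \<gamma> > 0" and p: "1/2 < p" "p \<le> 1"
  shows "hopf_bifurcation_at \<delta> \<gamma> p (arccos (- (1 - p) / p) / (\<delta> * \<gamma> * sqrt (2 * p - 1)))"
proof -
  define x where "x = - (1 - p) / p"
  define w where "w = \<delta> * \<gamma> * sqrt (2*p-1)"
  define T where "T = arccos x / (\<delta> * \<gamma> * sqrt (2 * p - 1))"
  have pp: "p > 0" using p by simp
  have x: "-1 < x" "x < 1" using p by (auto simp: x_def field_simps)
  have s: "sqrt (2*p-1) > 0" using p by simp
  have w: "w > 0" using k s by (simp add: w_def)
  have wT: "w * T = arccos x" unfolding T_def w_def[symmetric] using w by simp
  have T: "T > 0" using arccos_lt_bounded[OF x] k s by (simp add: T_def)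
  have cosx: "cos (w*T) = x" using x wT by simp
  have "1 - x\<^sup>2 = (2*p-1)/p\<^sup>2" using pp by (simp add: x_def field_simps power2_eq_square)
  then have "sqrt (1 - x\<^sup>2) = sqrt (2*p-1)/p" using pp by (simp add: real_sqrt_divide)
  then have sinx: "sin (w*T) = sqrt (2*p-1)/p" using x wT sin_arccos[of x] by simp
  have pk1: "p * \<delta> * \<gamma> * x = - ((1 - p) * \<delta> * \<gamma>)" using pp by (simp add: x_def field_simps)
  have pk2: "p * \<delta> * \<gamma> * (sqrt (2*p-1)/p) = w" using pp by (simp add: w_def field_simps)
  have root: "char_fun \<delta> \<gamma> p T (\<i> * complex_of_real w) = 0"
    unfolding char_fun_def complex_eq_iff
    using cosx sinx pk1 pk2 by (simp add: Re_exp Im_exp)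
  have root2: "char_fun \<delta> \<gamma> p T (- \<i> * complex_of_real w) = 0"
    unfolding char_fun_def complex_eq_iff
    using cosx sinx pk1 pk2 by (simp add: Re_exp Im_exp)
  define A where "A = complex_of_real ((1 - p) * \<delta> * \<gamma>)"
  define B where "B = complex_of_real (p * \<delta> * \<gamma>)"
  have key: "B * exp (- (\<i> * of_real w) * of_real T) = - (\<i> * of_real w + A)"
    using root unfolding char_fun_def A_def B_def by (simp add: algebra_simps add_eq_0_iff)
  define f where "f = (\<lambda>z::complex. z * exp z)"
  define z0 where "z0 = (\<i> * of_real w + A) * of_real T"
  define H where "H = (\<lambda>u. - (B * u * exp (A * u)))"
  have Bexp: "B = - (\<i> * of_real w + A) * exp ((\<i> * of_real w) * of_real T)"
  proof -
    have e1: "exp (- (\<i> * of_real w) * of_real T) * exp ((\<i> * of_real w) * of_real T) = 1"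
      by (simp add: exp_add[symmetric])
    have "B = B * exp (- (\<i> * of_real w) * of_real T) * exp ((\<i> * of_real w) * of_real T)"
      by (metis mult.assoc e1 mult_1_right)
    also have "\<dots> = - (\<i> * of_real w + A) * exp ((\<i> * of_real w) * of_real T)"
      by (simp only: key)
    finally show ?thesis .
  qed
  have fz0: "f z0 = H (of_real T)"
    unfolding f_def z0_def H_def Bexp by (simp add: algebra_simps exp_add)
  have df: "(f has_field_derivative (1 + z) * exp z) (at z)" for z
    unfolding f_def by (auto intro!: derivative_eq_intros simp: algebra_simps)
  have z0ne: "1 + z0 \<noteq> 0"
  proof
    assume "1 + z0 = 0"
    then have "Im (1 + z0) = 0" by simp
    then show False using w T by (simp add: z0_def A_def)
  qed
  have dfz0: "deriv f z0 = (1 + z0) * exp z0" using df by (simp add: DERIV_imp_deriv)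
  have holf: "f holomorphic_on UNIV" unfolding f_def by (intro holomorphic_intros)
  obtain r where r: "r > 0" "open (f ` ball z0 r)" "inj_on f (ball z0 r)"
    using has_complex_derivative_locally_invertible[OF holf, of z0] dfz0 z0ne by auto
  obtain g where g: "g holomorphic_on (f ` ball z0 r)"
      "\<And>z. z \<in> ball z0 r \<Longrightarrow> deriv f z * deriv g (f z) = 1"
      "\<And>z. z \<in> ball z0 r \<Longrightarrow> g (f z) = z"
    using holomorphic_has_inverse[OF holomorphic_on_subset[OF holf] _ r(3)] by blast
  define V where "V = f ` ball z0 r"
  have HT: "H (of_real T) \<in> V" using r fz0[symmetric] by (auto simp: V_def)
  have "open (H -` V)"
    using r(2) unfolding V_def by (intro continuous_open_vimage) (auto simp: H_def intro!: continuous_intros)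
  then obtain e0 where e0: "e0 > 0" "ball (of_real T) e0 \<subseteq> H -` V"
    using HT by (meson openE vimageI2)
  define Q where "Q = (\<lambda>u. g (H u) / u - A)"
  define L where "L = (\<lambda>\<tau>::real. Q (of_real \<tau>))"
  define e where "e = min e0 T"
  have gz0: "g (H (of_real T)) = z0" using g(3)[of z0] r fz0 by simp
  have LT: "L T = \<i> * complex_of_real w"
    using T by (simp add: L_def Q_def gz0 z0_def field_simps)
  have roots: "char_fun \<delta> \<gamma> p \<tau> (L \<tau>) = 0" if "\<bar>\<tau> - T\<bar> < e" for \<tau>
  proof -
    have tp: "\<tau> > 0" "\<tau> \<noteq> 0" using that by (auto simp: e_def)
    have "dist (complex_of_real \<tau>) (of_real T) < e0" using that by (simp add: e_def dist_norm of_real_diff[symmetric] abs_minus_commute del: of_real_diff)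
    then have "complex_of_real \<tau> \<in> ball (of_real T) e0" by (simp only: mem_ball dist_commute)
    then have "H (of_real \<tau>) \<in> V" using e0(2) by blast
    then obtain y where y: "y \<in> ball z0 r" "H (of_real \<tau>) = f y" by (auto simp: V_def)
    have gy: "g (H (of_real \<tau>)) = y" using g(3)[OF y(1)] y(2) by simp
    have fy: "y * exp y = - (B * of_real \<tau> * exp (A * of_real \<tau>))" using y(2) by (simp add: f_def H_def)
    have ex: "exp (- (y / of_real \<tau> - A) * of_real \<tau>) = exp (A * of_real \<tau>) / exp y"
    proof -
      have "- (y / of_real \<tau> - A) * of_real \<tau> = A * of_real \<tau> - y" using tp by (simp add: field_simps)
      then show ?thesis by (simp add: exp_diff)
    qed
    have "char_fun \<delta> \<gamma> p \<tau> (L \<tau>) = y / of_real \<tau> + B * exp (A * of_real \<tau>) / exp y"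
      unfolding char_fun_def L_def Q_def gy ex by (simp add: A_def B_def)
    also have "B * exp (A * of_real \<tau>) = - (y * exp y) / of_real \<tau>" using fy tp by (simp add: field_simps)
    finally show ?thesis using tp by (simp add: field_simps)
  qed
  have z0V: "z0 \<in> ball z0 r" using r by simp
  have "g field_differentiable at (H (of_real T))"
    using g(1) r(2) HT unfolding V_def by (meson holomorphic_on_imp_differentiable_at)
  then have dg: "(g has_field_derivative inverse ((1 + z0) * exp z0)) (at (H (of_real T)))"
    using g(2)[OF z0V] dfz0 fz0 by (metis DERIV_deriv_iff_field_differentiable inverse_unique mult.commute)
  define H' where "H' = - (B * exp (A * of_real T) + B * of_real T * (A * exp (A * of_real T)))"
  have dH: "(H has_field_derivative H') (at (of_real T))"
    unfolding H_def H'_def by (auto intro!: derivative_eq_intros simp: algebra_simps)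
  define Q' where "Q' = (inverse ((1 + z0) * exp z0) * H' * of_real T - z0) / (of_real T)\<^sup>2"
  have d1: "((\<lambda>u. g (H u)) has_field_derivative inverse ((1 + z0) * exp z0) * H') (at (of_real T))"
    using DERIV_chain2[OF dg dH] .
  have d2: "((\<lambda>u. g (H u) / u - A) has_field_derivative
      ((inverse ((1 + z0) * exp z0) * H' * of_real T - g (H (of_real T)) * 1) / (of_real T * of_real T) - 0))
      (at (of_real T))"
    using T by (intro DERIV_diff DERIV_divide d1 DERIV_ident DERIV_const) simp
  have dQ: "(Q has_field_derivative Q') (at (of_real T))"
    using d2 unfolding Q_def Q'_def gz0 by (simp add: power2_eq_square)
  have dL: "(L has_vector_derivative Q') (at T)"
  proof -
    have "((\<lambda>t. complex_of_real t) has_vector_derivative 1) (at T)"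
      using has_vector_derivative_of_real[of "\<lambda>t. t" 1 "at T"] by (simp add: DERIV_ident)
    from field_vector_diff_chain_at[OF this, of Q Q'] dQ
    show ?thesis by (simp add: L_def o_def)
  qed
  have H'T: "H' * of_real T = z0 * exp z0 * (1 + A * of_real T)"
  proof -
    have "H' * of_real T = H (of_real T) * (1 + A * of_real T)"
      by (simp add: H'_def H_def algebra_simps)
    then show ?thesis using fz0 by (simp add: f_def)
  qed
  have Q'eq: "Q' = - (\<i> * of_real w) * (\<i> * of_real w + A) / (1 + z0)"
  proof -
    have i1: "inverse ((1 + z0) * exp z0) * H' * of_real T = inverse ((1 + z0) * exp z0) * (H' * of_real T)"
      by (rule mult.assoc)
    have i2: "inverse ((1 + z0) * exp z0) * (z0 * exp z0 * (1 + A * of_real T)) = z0 * (1 + A * of_real T) / (1 + z0)"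
      using aux_inv[OF z0ne exp_not_eq_zero] .
    have "Q' = (z0 * (1 + A * of_real T) / (1 + z0) - z0) / (of_real T)\<^sup>2"
      unfolding Q'_def i1 H'T i2 ..
    also have "\<dots> = - (\<i> * of_real w) * (\<i> * of_real w + A) / (1 + z0)"
      unfolding z0_def by (rule aux2) (use T z0ne in \<open>simp_all add: z0_def\<close>)
    finally show ?thesis .
  qed
  have a0: "(1 - p) * \<delta> * \<gamma> \<ge> 0" using k p by (simp add: mult.assoc)
  have ReQ: "Re Q' > 0" unfolding Q'eq z0_def A_def using reQ[OF w T a0] .
  show ?thesis
    unfolding hopf_bifurcation_at_def T_def[symmetric] x_def[symmetric]
    using w root root2 LT roots dL ReQ T
    by (intro exI[of _ w] conjI exI[of _ L] exI[of _ Q'] exI[of _ e]) (auto simp: e_def e0)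
qed
theorem proposition4:
  fixes a b c d p :: real
  defines "\<delta>1 \<equiv> b - d"
      and "\<delta>2 \<equiv> c - a"
  defines "\<delta> \<equiv> \<delta>1 + \<delta>2"
  defines "s \<equiv> \<delta>1 / \<delta>"
  defines "\<gamma> \<equiv> s * (1 - s)"
  assumes "\<delta>1 > 0" and "\<delta>2 > 0" and "0 \<le> p" and "p \<le> 1"
  shows "(p \<le> 1/2 \<longrightarrow> (\<forall>\<tau> \<ge> 0. asympt_stable \<delta> \<gamma> p \<tau>)) \<and>
         (p > 1/2 \<longrightarrow> hopf_bifurcation_at \<delta> \<gamma> p
             (arccos (- (1 - p) / p) / (\<delta> * \<gamma> * sqrt (2 * p - 1))))"
proof -
  have d: "\<delta> > 0" using assms(6,7) by (simp add: \<delta>_def)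
  have s0: "0 < s" "s < 1" using assms(6,7) d by (simp_all add: s_def \<delta>_def field_simps)
  have g: "\<gamma> > 0" using s0 by (simp add: \<gamma>_def)
  have k: "\<delta> * \<gamma> > 0" using d g by simp
  show ?thesis using part_i[OF k] part_ii[OF k] assms(8,9) by auto
qed

end
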